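(* Let $m\ge 2$ be an integer and let $\mathcal{A}\subset\mathbb{R}$ be a finite alphabet. Let $(X^{(j)}_i)_{i\ge 1,\,1\le j\le m}$ be independent and identically distributed random variables with values in $\mathcal{A}$. Let $S:\mathcal{A}^m\to[0,\infty)$ be a function that is not identically zero, is invariant under permutations of its $m$ arguments, satisfies $\sup_{x\in\mathcal{A}^m}S(x)<\infty$, and for which there is a constant $D>0$ such that $|S(x)-S(y)|\le D$ whenever $x,y\in\mathcal{A}^m$ differ in at most one coordinate. Let $\gamma^*$ and $\gamma^*(p_2,\dots,p_m)$ be as defined in the context. Let $\varepsilon>0$, let $\delta^*\in(0,\gamma^* )$, and let $\boldsymbol p^{(1)}=(p^{(1)}_1,\dots,p^{(1)}_m)$, $\boldsymbol p^{(2)}=(p^{(2)}_1,\dots,p^{(2)}_m)$ satisfy $0<p^{(1)}_j<1<p^{(2)}_j$ for $j=2,\dots,m$, and be such that $\gamma^*(p_2,\dots,p_m)\le\delta^*$ for every $(p_2,\dots,p_m)\in(0,\infty)^{m-1}$ with $p_j\notin[p^{(1)}_j,p^{(2)}_j]$ for at least one $j\in\{2,\dots,m\}$. Let $\eta\in(0,\gamma^*-\delta^* )$. Then there exists $N=N(\varepsilon,\eta,\boldsymbol p^{(1)},\boldsymbol p^{(2)})$ such that for every $n\ge N$, all positive integers $v,d$ with $n=vd$, and every $\vec r\in\overline{\mathcal R}_{n,\varepsilon}(\boldsymbol p^{(1)},\boldsymbol p^{(2)})$, $$\mathbb{E}\big(L(\vec r)-L_n\big)\le-\frac{\eta\varepsilon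 n}{m}.$$
   Context: Alignments and optimal score: for finite words $w^{(1)},\dots,w^{(m)}$ over $\mathcal{A}$ of lengths $\ell_1,\dots,\ell_m$, an alignment is a choice of an integer $k\ge 0$ and, for each $j$, indices $1\le \pi^{(j)}_1<\cdots<\pi^{(j)}_k\le \ell_j$; its score is $\sum_{i=1}^k S(w^{(1)}_{\pi^{(1)}_i},\dots,w^{(m)}_{\pi^{(m)}_i})$. The optimal score $L(w^{(1)};\dots;w^{(m)})$ is the maximum score over all alignments (empty words allowed). $L_n$ denotes the optimal score of the words $X^{(j)}_1\cdots X^{(j)}_n$, $j=1,\dots,m$, and $\gamma^*:=\lim_n\mathbb{E}(L_n)/n=\sup_n\mathbb{E}(L_n)/n$. For $p_2,\dots,p_m>0$, $\gamma^*(p_2,\dots,p_m):=\lim_{n\to\infty}\frac{m\,\mathbb{E}\big(L(X^{(1)}_1\cdots X^{(1)}_n;\,X^{(2)}_1\cdots X^{(2)}_{\lceil np_2\rceil};\cdots;X^{(m)}_1\cdots X^{(m)}_{\lceil np_m\rceil})\big)}{n(1+\sum_{i=2}^m p_i)}$ (the limit exists). For $n=vd$, a tuple $\vec r=(r^{(j)}_k)_{2\le j\le m,\,0\le k\le d}$ of integers with $0=r^{(j)}_0\le r^{(j)}_1\le\cdots\le r^{(j)}_{d-1}\le r^{(j)}_d=n$ for each $j$ defines $L(\vec r):=\sum_{k=1}^d L\big((X^{(1)}_i)_{i=v(k-1)+1}^{vk};\,(X^{(2)}_i)_{i=r^{(2)}_{k-1}+1}^{r^{(2)}_k};\cdots;(X^{(m)}_i)_{i=r^{(m)}_{k-1}+1}^{r^{(m)}_k}\big)$.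 $\overline{\mathcal R}_{n,\varepsilon}(\boldsymbol p^{(1)},\boldsymbol p^{(2)})$ is the set of all such (non-random) tuples $\vec r$ for which $\mathrm{Card}\{k\in\{1,\dots,d\}:\ vp^{(1)}_j\le r^{(j)}_k-r^{(j)}_{k-1}\le vp^{(2)}_j\ \text{for all } j=2,\dots,m\}<(1-\varepsilon)d$. *)

theory Defs
  imports "HOL-Probability.Probability" "HOL-Combinatorics.Permutations"
begin

text \<open>Alignments are 0-indexed here: index functions pi j with values < length of word j.\<close>

definition alignments :: "real list list \<Rightarrow> (nat \<times> (nat \<Rightarrow> nat \<Rightarrow> nat)) set" where
  "alignments ws = {(k, \<pi>). \<forall>j<length ws.
       strict_mono_on {..<k} (\<pi> j) \<and> (\<forall>i<k. \<pi> j i < length (ws ! j))}"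

definition align_score :: "(real list \<Rightarrow> real) \<Rightarrow> real list list \<Rightarrow> nat \<Rightarrow> (nat \<Rightarrow> nat \<Rightarrow> nat) \<Rightarrow> real" where
  "align_score S ws k \<pi> = (\<Sum>i<k. S (map (\<lambda>j. (ws ! j) ! (\<pi> j i)) [0..<length ws]))"

definition opt_score :: "(real list \<Rightarrow> real) \<Rightarrow> real list list \<Rightarrow> real" where
  "opt_score S ws = (SUP a \<in> alignments ws. align_score S ws (fst a) (snd a))"

text \<open>The segment (X^(j)_i)_{i=a+1}^{b} of the j-th sequence (indices i are 1-based).\<close>
definition seg :: "(nat \<Rightarrow> nat \<Rightarrow> 'w \<Rightarrow> real) \<Rightarrow> nat \<Rightarrow> nat \<Rightarrow> nat \<Rightarrow> 'w \<Rightarrow> real list" where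
  "seg X j a b \<omega> = map (\<lambda>i. X j i \<omega>) [a+1..<b+1]"

definition Ln :: "(real list \<Rightarrow> real) \<Rightarrow> nat \<Rightarrow> (nat \<Rightarrow> nat \<Rightarrow> 'w \<Rightarrow> real) \<Rightarrow> nat \<Rightarrow> 'w \<Rightarrow> real" where
  "Ln S m X n \<omega> = opt_score S (map (\<lambda>j. seg X j 0 n \<omega>) [1..<m+1])"

definition gamma_star :: "'w measure \<Rightarrow> (real list \<Rightarrow> real) \<Rightarrow> nat \<Rightarrow> (nat \<Rightarrow> nat \<Rightarrow> 'w \<Rightarrow> real) \<Rightarrow> real" where
  "gamma_star M S m X = lim (\<lambda>n. (\<integral>\<omega>. Ln S m X n \<omega> \<partial>M) / real n)"

definition plen :: "(nat \<Rightarrow> real) \<Rightarrow> nat \<Rightarrow> nat \<Rightarrow> nat" where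
  "plen p n j = (if j = 1 then n else nat \<lceil>real n * p j\<rceil>)"

definition gamma_star_p :: "'w measure \<Rightarrow> (real list \<Rightarrow> real) \<Rightarrow> nat \<Rightarrow> (nat \<Rightarrow> nat \<Rightarrow> 'w \<Rightarrow> real)
    \<Rightarrow> (nat \<Rightarrow> real) \<Rightarrow> real" where
  "gamma_star_p M S m X p = lim (\<lambda>n.
      real m * (\<integral>\<omega>. opt_score S (map (\<lambda>j. seg X j 0 (plen p n j) \<omega>) [1..<m+1]) \<partial>M)
      / (real n * (1 + (\<Sum>i=2..m. p i))))"

text \<open>L(r) for n = v d; r j k for j = 2..m, k = 0..d.\<close>
definition L_r :: "(real list \<Rightarrow> real) \<Rightarrow> nat \<Rightarrow> (nat \<Rightarrow> nat \<Rightarrow> 'w \<Rightarrow> real) \<Rightarrow> nat \<Rightarrow> nat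
    \<Rightarrow> (nat \<Rightarrow> nat \<Rightarrow> nat) \<Rightarrow> 'w \<Rightarrow> real" where
  "L_r S m X v d r \<omega> = (\<Sum>k=1..d. opt_score S
      (seg X 1 (v * (k-1)) (v * k) \<omega> # map (\<lambda>j. seg X j (r j (k-1)) (r j k) \<omega>) [2..<m+1]))"

definition admissible_r :: "nat \<Rightarrow> nat \<Rightarrow> nat \<Rightarrow> (nat \<Rightarrow> nat \<Rightarrow> nat) \<Rightarrow> bool" where
  "admissible_r m v d r \<longleftrightarrow> (\<forall>j\<in>{2..m}. r j 0 = 0 \<and> r j d = v * d \<and> (\<forall>k<d. r j k \<le> r j (Suc k)))"

definition Rbar :: "nat \<Rightarrow> nat \<Rightarrow> nat \<Rightarrow> real \<Rightarrow> (nat \<Rightarrow> real) \<Rightarrow> (nat \<Rightarrow> real) \<Rightarrow> (nat \<Rightarrow> nat \<Rightarrow> nat) set" where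
  "Rbar m v d \<epsilon> p1 p2 = {r. admissible_r m v d r \<and>
      real (card {k\<in>{1..d}. \<forall>j\<in>{2..m}.
          real v * p1 j \<le> real (r j k - r j (k-1)) \<and> real (r j k - r j (k-1)) \<le> real v * p2 j})
      < (1 - \<epsilon>) * real d}"

end

theory Submission
  imports Defs
begin

lemma sum_lessThan_add_split: "sum (f::nat\<Rightarrow>real) {..<a+b} = sum f {..<a} + sum (\<lambda>i. f (a+i)) {..<b}"
  by (induction b) (auto simp: add.commute)

locale lcs3 = prob_space M for M :: "'w measure" +
  fixes A :: "real set" and m :: nat and X :: "nat \<Rightarrow> nat \<Rightarrow> 'w \<Rightarrow> real" and S :: "real list \<Rightarrow> real"
  assumes m2: "m \<ge> 2" and finA: "finite A"
    and X_meas: "\<forall>j\<in>{1..m}. \<forall>i\<ge>1. X j i \<in> borel_measurable M"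
    and X_vals: "\<forall>j\<in>{1..m}. \<forall>i\<ge>1. \<forall>\<omega>\<in>space M. X j i \<omega> \<in> A"
    and X_indep: "indep_vars (\<lambda>_. borel) (\<lambda>(j, i). X j i) ({1..m} \<times> {1..})"
    and X_ident: "\<forall>j\<in>{1..m}. \<forall>i\<ge>1. distr M borel (X j i) = distr M borel (X 1 1)"
    and S_nonneg: "\<forall>x. length x = m \<and> set x \<subseteq> A \<longrightarrow> S x \<ge> 0"
    and S_nonzero: "\<exists>x. length x = m \<and> set x \<subseteq> A \<and> S x \<noteq> 0"
    and S_sym: "\<forall>x \<sigma>. length x = m \<and> set x \<subseteq> A \<and> \<sigma> permutes {..<m}
                   \<longrightarrow> S (permute_list \<sigma> x) = S x"
    and S_bdd: "bdd_above (S ` {x. length x = m \<and> set x \<subseteq> A})"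
begin

definition wf :: "real list list \<Rightarrow> bool" where
  "wf ws \<longleftrightarrow> length ws = m \<and> (\<forall>w\<in>set ws. set w \<subseteq> A)"

definition Smax :: real where "Smax = Sup (S ` {x. length x = m \<and> set x \<subseteq> A})"

lemma S_le: "length x = m \<Longrightarrow> set x \<subseteq> A \<Longrightarrow> S x \<le> Smax"
  unfolding Smax_def by (rule cSup_upper[OF _ S_bdd]) auto

lemma Smax_nonneg: "0 \<le> Smax"
proof -
  obtain x where "length x = m" "set x \<subseteq> A" using S_nonzero by blast
  thus ?thesis using S_nonneg S_le[of x] by force
qed

lemma align_k:
  assumes "(k,\<pi>) \<in> alignments ws" "j < length ws"
  shows "k \<le> length (ws!j)"
proof -
  have sm: "strict_mono_on {..<k} (\<pi> j)" and lt: "\<forall>i<k. \<pi> j i < length (ws ! j)"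
    using assms unfolding alignments_def by auto
  have "inj_on (\<pi> j) {..<k}" by (rule strict_mono_on_imp_inj_on[OF sm])
  hence "card (\<pi> j ` {..<k}) = k" by (simp add: card_image)
  moreover have "\<pi> j ` {..<k} \<subseteq> {..<length (ws!j)}" using lt by auto
  ultimately show ?thesis by (metis card_lessThan card_mono finite_lessThan)
qed

lemma align_arg:
  assumes "wf ws" "(k,\<pi>) \<in> alignments ws" "i < k"
  shows "length (map (\<lambda>j. ws!j!\<pi> j i) [0..<m]) = m \<and> set (map (\<lambda>j. ws!j!\<pi> j i) [0..<m]) \<subseteq> A"
proof -
  have "\<And>j. j < m \<Longrightarrow> ws!j!\<pi> j i \<in> A"
  proof -
    fix j assume j: "j < m"
    have "\<pi> j i < length (ws!j)" using assms j unfolding alignments_def wf_def by auto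
    hence "ws!j!\<pi> j i \<in> set (ws!j)" by simp
    moreover have "ws!j \<in> set ws" using j assms(1) unfolding wf_def by auto
    ultimately show "ws!j!\<pi> j i \<in> A" using assms(1) unfolding wf_def by auto
  qed
  thus ?thesis by auto
qed

lemma score_bounds:
  assumes "wf ws" "(k,\<pi>) \<in> alignments ws"
  shows "0 \<le> align_score S ws k \<pi> \<and> align_score S ws k \<pi> \<le> real k * Smax"
proof -
  have lw: "length ws = m" using assms unfolding wf_def by auto
  have a: "\<And>i. i < k \<Longrightarrow> 0 \<le> S (map (\<lambda>j. ws!j!\<pi> j i) [0..<m]) \<and> S (map (\<lambda>j. ws!j!\<pi> j i) [0..<m]) \<le> Smax"
    using align_arg[OF assms] S_nonneg S_le by blast
  have "0 \<le> align_score S ws k \<pi>" unfolding align_score_def lw using a by (intro sum_nonneg) auto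
  moreover have "align_score S ws k \<pi> \<le> real k * Smax" unfolding align_score_def lw
    using sum_bounded_above[of "{..<k}" "\<lambda>i. S (map (\<lambda>j. ws!j!\<pi> j i) [0..<m])" Smax] a by auto
  ultimately show ?thesis by auto
qed

lemma al_zero: "(0, \<pi>) \<in> alignments ws"
  unfolding alignments_def by (auto simp: strict_mono_on_def)

lemma opt_bdd:
  assumes "wf ws"
  shows "bdd_above ((\<lambda>a. align_score S ws (fst a) (snd a)) ` alignments ws)"
proof (rule bdd_aboveI2)
  fix a assume a: "a \<in> alignments ws"
  obtain k \<pi> where kp: "a = (k,\<pi>)" by (cases a)
  have lw: "length ws = m" using assms unfolding wf_def by auto
  have "k \<le> length (ws!0)" using align_k[of k \<pi> ws 0] a kp lw m2 by auto
  hence "real k * Smax \<le> real (length (ws!0)) * Smax" using Smax_nonneg by (simp add: mult_right_mono)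
  thus "align_score S ws (fst a) (snd a) \<le> real (length (ws!0)) * Smax"
    using score_bounds[OF assms, of k \<pi>] a kp by auto
qed

lemma opt_ge:
  assumes "wf ws" "(k,\<pi>) \<in> alignments ws"
  shows "align_score S ws k \<pi> \<le> opt_score S ws"
  unfolding opt_score_def using cSUP_upper[OF assms(2) opt_bdd[OF assms(1)]] by simp

lemma opt_nonneg: "wf ws \<Longrightarrow> 0 \<le> opt_score S ws"
  using opt_ge[OF _ al_zero] by (simp add: align_score_def)

lemma opt_le:
  assumes "wf ws" "j < m"
  shows "opt_score S ws \<le> Smax * real (length (ws!j))"
  unfolding opt_score_def
proof (rule cSUP_least)
  show "alignments ws \<noteq> {}" using al_zero by blast
  fix a assume a: "a \<in> alignments ws"
  obtain k \<pi> where kp: "a = (k,\<pi>)" by (cases a)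
  have lw: "length ws = m" using assms unfolding wf_def by auto
  have "k \<le> length (ws!j)" using align_k[of k \<pi> ws j] a kp lw assms by auto
  hence "real k * Smax \<le> real (length (ws!j)) * Smax" using Smax_nonneg by (simp add: mult_right_mono)
  thus "align_score S ws (fst a) (snd a) \<le> Smax * real (length (ws!j))"
    using score_bounds[OF assms(1), of k \<pi>] a kp by (auto simp: mult.commute)
qed

definition cat :: "real list list \<Rightarrow> real list list \<Rightarrow> real list list" where
  "cat us ws = map (\<lambda>j. us!j @ ws!j) [0..<m]"

lemma wf_cat: assumes "wf us" "wf ws" shows "wf (cat us ws)"
  unfolding wf_def
proof
  show "length (cat us ws) = m" unfolding cat_def by simp
  show "\<forall>w\<in>set (cat us ws). set w \<subseteq> A"
  proof
    fix w assume "w \<in> set (cat us ws)"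
    then obtain j where j: "j < m" "w = us!j @ ws!j" unfolding cat_def by auto
    have "us!j \<in> set us" "ws!j \<in> set ws" using j assms unfolding wf_def by auto
    thus "set w \<subseteq> A" using j assms unfolding wf_def by auto
  qed
qed

lemma opt_cat:
  assumes us: "wf us" and ws: "wf ws"
  shows "opt_score S us + opt_score S ws \<le> opt_score S (cat us ws)"
proof -
  have lu: "length us = m" and lws: "length ws = m" using us ws unfolding wf_def by auto
  have key: "align_score S us k1 \<pi>1 + align_score S ws k2 \<pi>2 \<le> opt_score S (cat us ws)"
    if a1: "(k1,\<pi>1) \<in> alignments us" and a2: "(k2,\<pi>2) \<in> alignments ws" for k1 \<pi>1 k2 \<pi>2
  proof -
    define \<pi> where "\<pi> = (\<lambda>j i. if i < k1 then \<pi>1 j i else length (us!j) + \<pi>2 j (i - k1))"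
    have s1: "\<And>j. j < m \<Longrightarrow> strict_mono_on {..<k1} (\<pi>1 j) \<and> (\<forall>i<k1. \<pi>1 j i < length (us!j))"
      using a1 lu unfolding alignments_def by auto
    have s2: "\<And>j. j < m \<Longrightarrow> strict_mono_on {..<k2} (\<pi>2 j) \<and> (\<forall>i<k2. \<pi>2 j i < length (ws!j))"
      using a2 lws unfolding alignments_def by auto
    have lc: "length (cat us ws) = m" unfolding cat_def by simp
    have cj: "\<And>j. j < m \<Longrightarrow> cat us ws ! j = us!j @ ws!j" unfolding cat_def by simp
    have al: "(k1+k2, \<pi>) \<in> alignments (cat us ws)"
      unfolding alignments_def
    proof (clarsimp simp: lc cj)
      fix j assume j: "j < m"
      show "strict_mono_on {..<k1+k2} (\<pi> j) \<and> (\<forall>i<k1+k2. \<pi> j i < length (us!j) + length (ws!j))"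
      proof
        show "strict_mono_on {..<k1+k2} (\<pi> j)"
        proof (rule strict_mono_onI)
          fix r s assume r: "r \<in> {..<k1+k2}" and s: "s \<in> {..<k1+k2}" and rs: "r < s"
          show "\<pi> j r < \<pi> j s"
          proof (cases "s < k1")
            case True thus ?thesis using s1[OF j] rs r unfolding \<pi>_def strict_mono_on_def by auto
          next
            case False
            show ?thesis
            proof (cases "r < k1")
              case True thus ?thesis using s1[OF j] False unfolding \<pi>_def by auto
            next
              case False2: False
              have "r - k1 < k2" "s - k1 < k2" "r - k1 < s - k1" using r s rs False False2 by auto
              hence "\<pi>2 j (r - k1) < \<pi>2 j (s - k1)"
                using s2[OF j] unfolding strict_mono_on_def by auto
              thus ?thesis using False False2 unfolding \<pi>_def by auto
            qed
          qed
        qed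
        show "\<forall>i<k1+k2. \<pi> j i < length (us!j) + length (ws!j)"
          using s1[OF j] s2[OF j] unfolding \<pi>_def by auto
      qed
    qed
    have "align_score S (cat us ws) (k1+k2) \<pi> = align_score S us k1 \<pi>1 + align_score S ws k2 \<pi>2"
    proof -
      have e1: "\<And>i. i < k1 \<Longrightarrow> map (\<lambda>j. cat us ws ! j ! \<pi> j i) [0..<m] = map (\<lambda>j. us!j!\<pi>1 j i) [0..<m]"
        using s1 cj by (auto simp: \<pi>_def nth_append)
      have e2: "\<And>i. i < k2 \<Longrightarrow> map (\<lambda>j. cat us ws ! j ! \<pi> j (k1+i)) [0..<m] = map (\<lambda>j. ws!j!\<pi>2 j i) [0..<m]"
        using s2 cj by (auto simp: \<pi>_def nth_append)
      have "(\<Sum>i<k1. S (map (\<lambda>j. cat us ws ! j ! \<pi> j i) [0..<m])) = (\<Sum>i<k1. S (map (\<lambda>j. us!j!\<pi>1 j i) [0..<m]))"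
        by (rule sum.cong[OF refl], rule arg_cong[where f=S], rule e1) auto
      moreover have "(\<Sum>i<k2. S (map (\<lambda>j. cat us ws ! j ! \<pi> j (k1+i)) [0..<m])) = (\<Sum>i<k2. S (map (\<lambda>j. ws!j!\<pi>2 j i) [0..<m]))"
        by (rule sum.cong[OF refl], rule arg_cong[where f=S], rule e2) auto
      ultimately show ?thesis unfolding align_score_def lc lu lws sum_lessThan_add_split
        by simp
    qed
    thus ?thesis using opt_ge[OF wf_cat[OF us ws] al] by simp
  qed
  have ne: "\<And>ws. alignments ws \<noteq> {}" using al_zero by blast
  have "opt_score S us \<le> opt_score S (cat us ws) - align_score S ws k2 \<pi>2"
    if a2: "(k2,\<pi>2) \<in> alignments ws" for k2 \<pi>2
    unfolding opt_score_def[of S us]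
    by (rule cSUP_least[OF ne]) (use key a2 in force)
  hence "opt_score S ws \<le> opt_score S (cat us ws) - opt_score S us"
    unfolding opt_score_def[of S ws]
    by (intro cSUP_least[OF ne]) (force simp: opt_score_def)
  thus ?thesis by simp
qed

lemma opt_perm_le:
  assumes ws: "wf ws" and \<sigma>: "\<sigma> permutes {..<m}"
  shows "opt_score S ws \<le> opt_score S (permute_list \<sigma> ws)"
proof -
  have lw: "length ws = m" using ws unfolding wf_def by auto
  have wfp: "wf (permute_list \<sigma> ws)" using ws \<sigma> lw unfolding wf_def by simp
  have pn: "\<And>j. j < m \<Longrightarrow> permute_list \<sigma> ws ! j = ws ! \<sigma> j" using permute_list_nth[of \<sigma> ws] \<sigma> lw by simp
  have sj: "\<And>j. j < m \<Longrightarrow> \<sigma> j < m" using permutes_in_image[OF \<sigma>] by auto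
  show ?thesis unfolding opt_score_def[of S ws]
  proof (rule cSUP_least)
    show "alignments ws \<noteq> {}" using al_zero by blast
    fix a assume a: "a \<in> alignments ws"
    obtain k \<pi> where kp: "a = (k,\<pi>)" by (cases a)
    have al: "(k, \<lambda>j. \<pi> (\<sigma> j)) \<in> alignments (permute_list \<sigma> ws)"
      using a kp sj pn lw unfolding alignments_def by auto
    have "align_score S (permute_list \<sigma> ws) k (\<lambda>j. \<pi> (\<sigma> j)) = align_score S ws k \<pi>"
      unfolding align_score_def length_permute_list lw
    proof (rule sum.cong[OF refl])
      fix i assume i: "i \<in> {..<k}"
      have "map (\<lambda>j. permute_list \<sigma> ws ! j ! \<pi> (\<sigma> j) i) [0..<m]
          = permute_list \<sigma> (map (\<lambda>j. ws!j!\<pi> j i) [0..<m])"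
        using pn sj by (auto simp: permute_list_def)
      moreover have "S (permute_list \<sigma> (map (\<lambda>j. ws!j!\<pi> j i) [0..<m])) = S (map (\<lambda>j. ws!j!\<pi> j i) [0..<m])"
        using S_sym align_arg[OF ws, of k \<pi> i] a kp i \<sigma> by auto
      ultimately show "S (map (\<lambda>j. permute_list \<sigma> ws ! j ! \<pi> (\<sigma> j) i) [0..<m]) = S (map (\<lambda>j. ws!j!\<pi> j i) [0..<m])"
        by simp
    qed
    thus "align_score S ws (fst a) (snd a) \<le> opt_score S (permute_list \<sigma> ws)"
      using opt_ge[OF wfp al] kp by simp
  qed
qed

lemma opt_perm:
  assumes ws: "wf ws" and \<sigma>: "\<sigma> permutes {..<m}"
  shows "opt_score S (permute_list \<sigma> ws) = opt_score S ws"
proof -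
  have lw: "length ws = m" using ws unfolding wf_def by auto
  have wfp: "wf (permute_list \<sigma> ws)" using ws \<sigma> lw unfolding wf_def by simp
  have i: "inv \<sigma> permutes {..<m}" using permutes_inv[OF \<sigma>] .
  have "permute_list (inv \<sigma>) (permute_list \<sigma> ws) = permute_list (\<sigma> \<circ> inv \<sigma>) ws"
    using permute_list_compose[of "inv \<sigma>" ws \<sigma>] i lw by simp
  also have "\<dots> = ws" using permutes_inv_o(1)[OF \<sigma>] by simp
  finally have "opt_score S (permute_list \<sigma> ws) \<le> opt_score S ws"
    using opt_perm_le[OF wfp i] by simp
  thus ?thesis using opt_perm_le[OF ws \<sigma>] by simp
qed

end

context lcs3 begin

definition q :: "real \<Rightarrow> real" where "q c = prob {\<omega>\<in>space M. X 1 1 \<omega> = c}"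

lemma Xm: "j \<in> {1..m} \<Longrightarrow> 1 \<le> i \<Longrightarrow> X j i \<in> borel_measurable M"
  using X_meas by auto

lemma sing_borel: "{c} \<in> sets (borel :: real measure)"
  by (intro borel_closed closed_singleton)

lemma ev_pt: "j \<in> {1..m} \<Longrightarrow> 1 \<le> i \<Longrightarrow> X j i -` {c} \<inter> space M \<in> events"
  by (rule measurable_sets[OF Xm sing_borel])

lemma prob_pt:
  assumes "j \<in> {1..m}" "1 \<le> i"
  shows "prob (X j i -` {c} \<inter> space M) = q c"
proof -
  have m1: "(1::nat) \<in> {1..m}" using m2 by auto
  have "prob (X j i -` {c} \<inter> space M) = measure (distr M borel (X j i)) {c}"
    by (rule measure_distr[OF Xm[OF assms] sing_borel, symmetric])
  also have "distr M borel (X j i) = distr M borel (X 1 1)" using X_ident assms by blast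
  also have "measure (distr M borel (X 1 1)) {c} = prob (X 1 1 -` {c} \<inter> space M)"
    by (rule measure_distr[OF Xm[OF m1 order_refl] sing_borel])
  also have "X 1 1 -` {c} \<inter> space M = {\<omega>\<in>space M. X 1 1 \<omega> = c}" by auto
  finally show ?thesis unfolding q_def .
qed

lemma formula:
  fixes \<phi> :: "'i \<Rightarrow> nat \<times> nat" and G :: "('i \<Rightarrow> real) \<Rightarrow> real"
  assumes fin: "finite I" and inj: "inj_on \<phi> I" and rng: "\<phi> ` I \<subseteq> {1..m} \<times> {1..}"
  shows "integrable M (\<lambda>\<omega>. G (restrict (\<lambda>x. X (fst (\<phi> x)) (snd (\<phi> x)) \<omega>) I))"
    "(\<integral>\<omega>. G (restrict (\<lambda>x. X (fst (\<phi> x)) (snd (\<phi> x)) \<omega>) I) \<partial>M)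
       = (\<Sum>a\<in>PiE I (\<lambda>_. A). G a * (\<Prod>x\<in>I. q (a x)))"
proof -
  define Y where "Y x \<omega> = X (fst (\<phi> x)) (snd (\<phi> x)) \<omega>" for x \<omega>
  define E where "E a = {\<omega>\<in>space M. \<forall>x\<in>I. Y x \<omega> = a x}" for a :: "'i \<Rightarrow> real"
  define P where "P = PiE I (\<lambda>_. A)"
  have finP: "finite P" unfolding P_def using fin finA by (simp add: finite_PiE)
  have Ym: "x \<in> I \<Longrightarrow> fst (\<phi> x) \<in> {1..m} \<and> 1 \<le> snd (\<phi> x)" for x
    using rng by (auto simp: mem_Times_iff)
  have Eev: "E a \<in> events" for a
    unfolding E_def
  proof (rule sets.sets_Collect_finite_All[OF _ fin])
    fix x assume x: "x \<in> I"
    have "{\<omega>\<in>space M. Y x \<omega> = a x} = X (fst (\<phi> x)) (snd (\<phi> x)) -` {a x} \<inter> space M"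
      unfolding Y_def by auto
    thus "{\<omega>\<in>space M. Y x \<omega> = a x} \<in> events" using ev_pt Ym[OF x] by auto
  qed
  have pt: "G (restrict (\<lambda>x. Y x \<omega>) I) = (\<Sum>a\<in>P. G a * indicator (E a) \<omega>)" if \<omega>: "\<omega> \<in> space M" for \<omega>
  proof -
    define b where "b = restrict (\<lambda>x. Y x \<omega>) I"
    have bP: "b \<in> P" unfolding b_def P_def Y_def using Ym X_vals \<omega> by auto
    have "indicator (E a) \<omega> = (if b = a then 1 else (0::real))" if a: "a \<in> P" for a
    proof -
      have "\<omega> \<in> E a \<longleftrightarrow> b = a"
      proof
        assume "\<omega> \<in> E a"
        hence "\<forall>x\<in>I. Y x \<omega> = a x" unfolding E_def by auto
        thus "b = a" using a unfolding b_def P_def by (auto simp: fun_eq_iff PiE_def extensional_def)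
      next
        assume "b = a" thus "\<omega> \<in> E a" using \<omega> unfolding E_def b_def by auto
      qed
      thus ?thesis by (auto simp: indicator_def)
    qed
    hence "(\<Sum>a\<in>P. G a * indicator (E a) \<omega>) = (\<Sum>a\<in>P. if b = a then G a else 0)"
      by (intro sum.cong) auto
    also have "\<dots> = G b" using bP finP by simp
    finally show ?thesis unfolding b_def by simp
  qed
  have int1: "integrable M (\<lambda>\<omega>. \<Sum>a\<in>P. G a * indicator (E a) \<omega>)"
  proof (rule Bochner_Integration.integrable_sum[where f="\<lambda>a \<omega>. G a * indicator (E a) \<omega>"])
    fix a assume "a \<in> P"
    have "integrable M (indicator (E a) :: 'w \<Rightarrow> real)"
      by (rule integrable_real_indicator[OF Eev]) (simp add: less_top[symmetric])
    thus "integrable M (\<lambda>\<omega>. G a * indicator (E a) \<omega>)" by (rule integrable_mult_right)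
  qed
  have c1: "\<And>\<omega>. \<omega> \<in> space M \<Longrightarrow> G (restrict (\<lambda>x. X (fst (\<phi> x)) (snd (\<phi> x)) \<omega>) I) = (\<Sum>a\<in>P. G a * indicator (E a) \<omega>)"
    using pt unfolding Y_def .
  have "integrable M (\<lambda>\<omega>. G (restrict (\<lambda>x. X (fst (\<phi> x)) (snd (\<phi> x)) \<omega>) I)) \<longleftrightarrow> integrable M (\<lambda>\<omega>. \<Sum>a\<in>P. G a * indicator (E a) \<omega>)"
    by (intro Bochner_Integration.integrable_cong refl c1)
  thus int: "integrable M (\<lambda>\<omega>. G (restrict (\<lambda>x. X (fst (\<phi> x)) (snd (\<phi> x)) \<omega>) I))"
    using int1 by simp
  have "(\<integral>\<omega>. G (restrict (\<lambda>x. X (fst (\<phi> x)) (snd (\<phi> x)) \<omega>) I) \<partial>M)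
      = (\<integral>\<omega>. (\<Sum>a\<in>P. G a * indicator (E a) \<omega>) \<partial>M)"
    by (intro Bochner_Integration.integral_cong refl c1)
  also have "\<dots> = (\<Sum>a\<in>P. G a * prob (E a))"
  proof -
    have ii: "integrable M (indicator (E a) :: 'w \<Rightarrow> real)" for a
      by (rule integrable_real_indicator[OF Eev]) (simp add: less_top[symmetric])
    have "(\<integral>\<omega>. (\<Sum>a\<in>P. G a * indicator (E a) \<omega>) \<partial>M) = (\<Sum>a\<in>P. (\<integral>\<omega>. G a * indicator (E a) \<omega> \<partial>M))"
      by (rule Bochner_Integration.integral_sum) (rule integrable_mult_right[OF ii])
    also have "\<dots> = (\<Sum>a\<in>P. G a * prob (E a))"
    proof (rule sum.cong[OF refl])
      fix a
      have "(\<integral>\<omega>. G a * indicator (E a) \<omega> \<partial>M) = G a * (\<integral>\<omega>. indicator (E a) \<omega> \<partial>M)"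
        by (rule integral_mult_right_zero)
      also have "(\<integral>\<omega>. indicator (E a) \<omega> \<partial>M) = prob (E a \<inter> space M)"
        using Bochner_Integration.integral_indicator[of M "E a"] by simp
      also have "E a \<inter> space M = E a" using sets.sets_into_space[OF Eev[of a]] by blast
      finally show "(\<integral>\<omega>. G a * indicator (E a) \<omega> \<partial>M) = G a * prob (E a)" .
    qed
    finally show ?thesis .
  qed
  also have "\<dots> = (\<Sum>a\<in>P. G a * (\<Prod>x\<in>I. q (a x)))"
  proof (rule sum.cong[OF refl])
    fix a assume a: "a \<in> P"
    have "prob (E a) = (\<Prod>x\<in>I. q (a x))"
    proof (cases "I = {}")
      case True
      hence "E a = space M" unfolding E_def by auto
      thus ?thesis using True by (simp add: prob_space)
    next
      case False
      define F where "F y = (\<lambda>(j, i). X j i) y -` {a (inv_into I \<phi> y)} \<inter> space M" for y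
      have ind: "indep_sets (\<lambda>y. {(\<lambda>(j, i). X j i) y -` B \<inter> space M | B. B \<in> sets borel}) ({1..m} \<times> {1..})"
        using X_indep unfolding indep_vars_def2 by auto
      have "prob (\<Inter>y\<in>\<phi>`I. F y) = (\<Prod>y\<in>\<phi>`I. prob (F y))"
      proof (rule indep_setsD[OF ind rng])
        show "\<phi> ` I \<noteq> {}" using False by simp
        show "finite (\<phi> ` I)" using fin by simp
        show "\<forall>j\<in>\<phi> ` I. F j \<in> {(\<lambda>(j, i). X j i) j -` B \<inter> space M | B. B \<in> sets borel}"
        proof
          fix y assume "y \<in> \<phi> ` I"
          show "F y \<in> {(\<lambda>(j, i). X j i) y -` B \<inter> space M | B. B \<in> sets borel}"
            unfolding F_def by (intro CollectI exI[of _ "{a (inv_into I \<phi> y)}"]) simp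
        qed
      qed
      also have "\<dots> = (\<Prod>x\<in>I. prob (F (\<phi> x)))" by (simp add: prod.reindex[OF inj])
      also have "\<dots> = (\<Prod>x\<in>I. q (a x))"
      proof (rule prod.cong[OF refl])
        fix x assume x: "x \<in> I"
        have "F (\<phi> x) = X (fst (\<phi> x)) (snd (\<phi> x)) -` {a x} \<inter> space M"
          unfolding F_def using inv_into_f_f[OF inj x] by (auto split: prod.splits)
        thus "prob (F (\<phi> x)) = q (a x)" using prob_pt Ym[OF x] by auto
      qed
      also have "(\<Inter>y\<in>\<phi>`I. F y) = E a"
      proof -
        have "(\<Inter>y\<in>\<phi>`I. F y) = (\<Inter>x\<in>I. F (\<phi> x))" by auto
        also have "\<dots> = E a"
        proof -
          have "\<And>x. x \<in> I \<Longrightarrow> F (\<phi> x) = {\<omega>\<in>space M. Y x \<omega> = a x}"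
            unfolding F_def Y_def using inv_into_f_f[OF inj] by (auto split: prod.splits)
          thus ?thesis unfolding E_def using False by auto
        qed
        finally show ?thesis .
      qed
      finally show ?thesis .
    qed
    thus "G a * prob (E a) = G a * (\<Prod>x\<in>I. q (a x))" by simp
  qed
  finally have fe: "(\<integral>\<omega>. G (restrict (\<lambda>x. X (fst (\<phi> x)) (snd (\<phi> x)) \<omega>) I) \<partial>M)
       = (\<Sum>a\<in>P. G a * (\<Prod>x\<in>I. q (a x)))" .
  show "(\<integral>\<omega>. G (restrict (\<lambda>x. X (fst (\<phi> x)) (snd (\<phi> x)) \<omega>) I) \<partial>M)
       = (\<Sum>a\<in>PiE I (\<lambda>_. A). G a * (\<Prod>x\<in>I. q (a x)))" using fe by (simp only: P_def)
qed

end

lemma map_upt_add_split: "map f [0..<a+b] = map f [0..<a] @ map (\<lambda>i. f (a+i)) [0..<b]"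
  by (induction b) auto

context lcs3 begin

definition W :: "(nat \<Rightarrow> nat) \<Rightarrow> (nat \<Rightarrow> nat) \<Rightarrow> (nat \<Rightarrow> nat) \<Rightarrow> 'w \<Rightarrow> real list list" where
  "W s off len \<omega> = map (\<lambda>j. map (\<lambda>i. X (s j) (off j + i + 1) \<omega>) [0..<len j]) [0..<m]"

definition Idx :: "(nat \<Rightarrow> nat) \<Rightarrow> (nat \<times> nat) set" where
  "Idx len = Sigma {..<m} (\<lambda>j. {..<len j})"

definition Gl :: "(nat \<Rightarrow> nat) \<Rightarrow> (nat \<times> nat \<Rightarrow> real) \<Rightarrow> real" where
  "Gl len a = opt_score S (map (\<lambda>j. map (\<lambda>i. a (j,i)) [0..<len j]) [0..<m])"

definition Phi :: "(nat \<Rightarrow> nat) \<Rightarrow> real" where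
  "Phi len = (\<Sum>a\<in>PiE (Idx len) (\<lambda>_. A). Gl len a * (\<Prod>x\<in>Idx len. q (a x)))"

lemma wfW:
  assumes "\<omega> \<in> space M" "s ` {..<m} \<subseteq> {1..m}"
  shows "wf (W s off len \<omega>)"
proof -
  have "X (s j) (off j + i + 1) \<omega> \<in> A" if "j < m" for j i
    using X_vals assms that by auto
  thus ?thesis unfolding wf_def W_def by auto
qed

lemma lenW: "j < m \<Longrightarrow> length (W s off len \<omega> ! j) = len j"
  unfolding W_def by simp

lemma EW:
  assumes inj: "inj_on s {..<m}" and rng: "s ` {..<m} \<subseteq> {1..m}"
  shows "integrable M (\<lambda>\<omega>. opt_score S (W s off len \<omega>))"
    "(\<integral>\<omega>. opt_score S (W s off len \<omega>) \<partial>M) = Phi len"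
proof -
  define \<phi> where "\<phi> = (\<lambda>(j::nat, i::nat). (s j, off j + i + 1))"
  have fin: "finite (Idx len)" unfolding Idx_def by auto
  have inj\<phi>: "inj_on \<phi> (Idx len)"
    using inj unfolding inj_on_def \<phi>_def Idx_def by (auto, metis lessThan_iff add_left_cancel)
  have rng\<phi>: "\<phi> ` Idx len \<subseteq> {1..m} \<times> {1..}"
    using rng unfolding \<phi>_def Idx_def by auto
  have eq: "Gl len (restrict (\<lambda>x. X (fst (\<phi> x)) (snd (\<phi> x)) \<omega>) (Idx len)) = opt_score S (W s off len \<omega>)" for \<omega>
    unfolding Gl_def W_def
    by (intro arg_cong[where f="opt_score S"] map_cong refl) (auto simp: Idx_def \<phi>_def)
  show "integrable M (\<lambda>\<omega>. opt_score S (W s off len \<omega>))"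
    using formula(1)[OF fin inj\<phi> rng\<phi>, of "Gl len"] unfolding eq .
  show "(\<integral>\<omega>. opt_score S (W s off len \<omega>) \<partial>M) = Phi len"
    using formula(2)[OF fin inj\<phi> rng\<phi>, of "Gl len"] unfolding eq Phi_def .
qed

abbreviation "Z \<equiv> (\<lambda>_::nat. 0::nat)"

lemma Suc_inj: "inj_on Suc {..<m}" and Suc_rng: "Suc ` {..<m} \<subseteq> {1..m}"
  by auto

lemma EW0: "integrable M (\<lambda>\<omega>. opt_score S (W Suc Z len \<omega>))"
  "(\<integral>\<omega>. opt_score S (W Suc Z len \<omega>) \<partial>M) = Phi len"
  using EW[OF Suc_inj Suc_rng] by auto

lemma Phi_nonneg: "0 \<le> Phi len"
proof -
  have "0 \<le> (\<integral>\<omega>. opt_score S (W Suc Z len \<omega>) \<partial>M)"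
    by (rule Bochner_Integration.integral_nonneg) (rule opt_nonneg[OF wfW[OF _ Suc_rng]])
  thus ?thesis using EW0 by simp
qed

lemma Phi_le:
  assumes j: "j < m"
  shows "Phi len \<le> Smax * real (len j)"
proof -
  have "(\<integral>\<omega>. opt_score S (W Suc Z len \<omega>) \<partial>M) \<le> (\<integral>\<omega>. Smax * real (len j) \<partial>M)"
  proof (rule Bochner_Integration.integral_mono[OF EW0(1)])
    show "integrable M (\<lambda>\<omega>. Smax * real (len j))" by simp
    fix \<omega> assume "\<omega> \<in> space M"
    thus "opt_score S (W Suc Z len \<omega>) \<le> Smax * real (len j)"
      using opt_le[OF wfW[OF _ Suc_rng] j] lenW[OF j] by metis
  qed
  thus ?thesis using EW0 by (simp add: prob_space)
qed

lemma Phi_zero: "j < m \<Longrightarrow> len j = 0 \<Longrightarrow> Phi len = 0"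
  using Phi_le[of j len] Phi_nonneg[of len] by simp

lemma W_cong: "(\<And>j. j < m \<Longrightarrow> l1 j = l2 j) \<Longrightarrow> W s off l1 \<omega> = W s off l2 \<omega>"
  unfolding W_def by (intro map_cong refl) auto

lemma Phi_cong:
  assumes "\<And>j. j < m \<Longrightarrow> l1 j = l2 j"
  shows "Phi l1 = Phi l2"
  using EW0(2)[of l1] EW0(2)[of l2] W_cong[OF assms] by simp

lemma Phi_super: "Phi l1 + Phi l2 \<le> Phi (\<lambda>j. l1 j + l2 j)"
proof -
  have cat_eq: "W Suc Z (\<lambda>j. l1 j + l2 j) \<omega> = cat (W Suc Z l1 \<omega>) (W Suc l1 l2 \<omega>)" for \<omega>
    unfolding W_def cat_def by (auto simp: map_upt_add_split add_ac)
  have int2: "integrable M (\<lambda>\<omega>. opt_score S (W Suc l1 l2 \<omega>))"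
    and e2: "(\<integral>\<omega>. opt_score S (W Suc l1 l2 \<omega>) \<partial>M) = Phi l2"
    using EW[OF Suc_inj Suc_rng, of l1 l2] by auto
  have "Phi l1 + Phi l2 = (\<integral>\<omega>. opt_score S (W Suc Z l1 \<omega>) + opt_score S (W Suc l1 l2 \<omega>) \<partial>M)"
    using Bochner_Integration.integral_add[OF EW0(1)[of l1] int2] EW0(2)[of l1] e2 by simp
  also have "\<dots> \<le> (\<integral>\<omega>. opt_score S (W Suc Z (\<lambda>j. l1 j + l2 j) \<omega>) \<partial>M)"
  proof (rule Bochner_Integration.integral_mono)
    show "integrable M (\<lambda>\<omega>. opt_score S (W Suc Z l1 \<omega>) + opt_score S (W Suc l1 l2 \<omega>))"
      using EW0(1) int2 by simp
    show "integrable M (\<lambda>\<omega>. opt_score S (W Suc Z (\<lambda>j. l1 j + l2 j) \<omega>))" by (rule EW0(1))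
    fix \<omega> assume "\<omega> \<in> space M"
    thus "opt_score S (W Suc Z l1 \<omega>) + opt_score S (W Suc l1 l2 \<omega>) \<le> opt_score S (W Suc Z (\<lambda>j. l1 j + l2 j) \<omega>)"
      unfolding cat_eq by (intro opt_cat wfW Suc_rng)
  qed
  also have "\<dots> = Phi (\<lambda>j. l1 j + l2 j)" by (rule EW0(2))
  finally show ?thesis .
qed

lemma Phi_mono:
  assumes "\<And>j. j < m \<Longrightarrow> l1 j \<le> l2 j"
  shows "Phi l1 \<le> Phi l2"
proof -
  have "Phi l1 \<le> Phi l1 + Phi (\<lambda>j. l2 j - l1 j)" using Phi_nonneg by simp
  also have "\<dots> \<le> Phi (\<lambda>j. l1 j + (l2 j - l1 j))" by (rule Phi_super)
  also have "\<dots> = Phi l2" by (rule Phi_cong) (use assms in auto)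
  finally show ?thesis .
qed

lemma Phi_sum: fixes K :: nat shows "(\<Sum>i<K. Phi (f i)) \<le> Phi (\<lambda>j. \<Sum>i<K. f i j)"
proof (induction K)
  case 0
  have "Phi (\<lambda>j. 0) = 0" by (rule Phi_zero[of 0]) (use m2 in auto)
  thus ?case by simp
next
  case (Suc K)
  have "(\<Sum>i<Suc K. Phi (f i)) \<le> Phi (\<lambda>j. \<Sum>i<K. f i j) + Phi (f K)" using Suc by simp
  also have "\<dots> \<le> Phi (\<lambda>j. (\<Sum>i<K. f i j) + f K j)" by (rule Phi_super)
  finally show ?case by simp
qed

lemma Phi_mult: "real t * Phi len \<le> Phi (\<lambda>j. t * len j)"
proof (induction t)
  case 0 thus ?case using Phi_nonneg by simp
next
  case (Suc t)
  have "real (Suc t) * Phi len = real t * Phi len + Phi len" by (simp add: algebra_simps)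
  also have "\<dots> \<le> Phi (\<lambda>j. t * len j) + Phi len" using Suc by simp
  also have "\<dots> \<le> Phi (\<lambda>j. t * len j + len j)" by (rule Phi_super)
  finally show ?case by (simp add: add.commute)
qed

lemma Phi_perm:
  assumes \<sigma>: "\<sigma> permutes {..<m}"
  shows "Phi (\<lambda>j. len (\<sigma> j)) = Phi len"
proof -
  have sj: "\<And>j. j < m \<Longrightarrow> \<sigma> j < m" using permutes_in_image[OF \<sigma>] by auto
  have inj: "inj_on (\<lambda>j. Suc (\<sigma> j)) {..<m}"
    using permutes_inj[OF \<sigma>] unfolding inj_def inj_on_def by auto
  have rng: "(\<lambda>j. Suc (\<sigma> j)) ` {..<m} \<subseteq> {1..m}" using sj by (auto simp: Suc_le_eq)
  have pe: "W (\<lambda>j. Suc (\<sigma> j)) Z (\<lambda>j. len (\<sigma> j)) \<omega> = permute_list \<sigma> (W Suc Z len \<omega>)" for \<omega>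
    unfolding W_def permute_list_def using sj by auto
  have "Phi (\<lambda>j. len (\<sigma> j)) = (\<integral>\<omega>. opt_score S (W (\<lambda>j. Suc (\<sigma> j)) Z (\<lambda>j. len (\<sigma> j)) \<omega>) \<partial>M)"
    using EW(2)[OF inj rng] by simp
  also have "\<dots> = (\<integral>\<omega>. opt_score S (W Suc Z len \<omega>) \<partial>M)"
    unfolding pe by (intro Bochner_Integration.integral_cong refl opt_perm wfW Suc_rng \<sigma>)
  also have "\<dots> = Phi len" by (rule EW0(2))
  finally show ?thesis .
qed

end

lemma rot_inj_aux: assumes "(x::nat) < m" "y < m" "(c + x) mod m = (c + y) mod m" "x \<le> y" shows "x = y"
proof -
  have "m dvd (c + y) - (c + x)" using assms(3,4) by (subst mod_eq_dvd_iff_nat[symmetric]) auto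
  hence "m dvd y - x" by simp
  moreover have "y - x < m" using assms by auto
  ultimately have "y - x = 0" using nat_dvd_not_less by (metis gr0I)
  thus ?thesis using assms(4) by simp
qed

lemma rot_inj: "(x::nat) < m \<Longrightarrow> y < m \<Longrightarrow> (c + x) mod m = (c + y) mod m \<Longrightarrow> x = y"
  using rot_inj_aux[of x m y c] rot_inj_aux[of y m x c] by (cases "x \<le> y") auto

lemma rot_bij: "bij_betw (\<lambda>i. (c + i) mod m) {..<m} {..<(m::nat)}"
proof -
  have inj: "inj_on (\<lambda>i. (c + i) mod m) {..<m}" by (intro inj_onI) (auto intro: rot_inj)
  have "(\<lambda>i. (c + i) mod m) ` {..<m} \<subseteq> {..<m}" by auto
  hence "(\<lambda>i. (c + i) mod m) ` {..<m} = {..<m}" by (intro endo_inj_surj inj) auto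
  thus ?thesis using inj unfolding bij_betw_def by auto
qed

lemma rot_permutes: "(\<lambda>j. if j < m then (j + i) mod m else j) permutes {..<(m::nat)}"
proof (rule bij_imp_permutes)
  have "bij_betw (\<lambda>j. (i + j) mod m) {..<m} {..<m}" by (rule rot_bij)
  thus "bij_betw (\<lambda>j. if j < m then (j + i) mod m else j) {..<m} {..<m}"
    by (rule bij_betw_cong[THEN iffD1, rotated]) (auto simp: add.commute)
qed auto

lemma fekete:
  fixes a :: "nat \<Rightarrow> real"
  assumes sup: "\<And>s t. a s + a t \<le> a (s+t)" and nn: "\<And>n. 0 \<le> a n" and bd: "\<And>n. a n \<le> C * real n"
  shows "\<exists>L. (\<lambda>n. a n / real n) \<longlonglongrightarrow> L \<and> (\<forall>n\<ge>1. a n / real n \<le> L)"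
proof -
  have mult: "real k * a n \<le> a (k * n)" for k n
  proof (induction k)
    case 0 thus ?case using nn by simp
  next
    case (Suc k)
    have "real (Suc k) * a n = real k * a n + a n" by (simp add: algebra_simps)
    also have "\<dots> \<le> a (k*n) + a n" using Suc by simp
    also have "\<dots> \<le> a (k*n + n)" by (rule sup)
    finally show ?case by (simp add: add.commute)
  qed
  have divb: "real (n div q) * a q \<le> a n" for n q
  proof -
    have "real (n div q) * a q \<le> a ((n div q) * q)" by (rule mult)
    also have "\<dots> \<le> a ((n div q) * q) + a (n mod q)" using nn by simp
    also have "\<dots> \<le> a ((n div q) * q + n mod q)" by (rule sup)
    finally show ?thesis by simp
  qed
  define L where "L = (SUP n\<in>{1..}. a n / real n)"
  have bdd: "bdd_above ((\<lambda>n. a n / real n) ` {1..})"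
  proof (rule bdd_aboveI2)
    fix n :: nat assume "n \<in> {1..}"
    thus "a n / real n \<le> C" using bd[of n] by (simp add: divide_le_eq mult.commute)
  qed
  have up: "\<forall>n\<ge>1. a n / real n \<le> L" unfolding L_def using bdd by (auto intro: cSUP_upper)
  have "(\<lambda>n. a n / real n) \<longlonglongrightarrow> L"
  proof (rule LIMSEQ_I)
    fix r :: real assume r: "0 < r"
    have "L - r/2 < L" using r by simp
    have "\<exists>x\<in>{1..}. L - r/2 < a x / real x"
      using less_cSUP_iff[OF _ bdd, of "L - r/2"] \<open>L - r/2 < L\<close> unfolding L_def by auto
    then obtain q where q: "q \<in> {1..}" "L - r/2 < a q / real q" by blast
    have q1: "real q \<ge> 1" using q by simp
    define N where "N = nat \<lceil>2 * a q / r\<rceil> + q + 1"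
    have "norm (a n / real n - L) < r" if n: "n \<ge> N" for n
    proof -
      have n1: "real n > 2 * a q / r" using n unfolding N_def by linarith
      have npos: "real n > 0" using n unfolding N_def by simp
      have nq: "real n - real q \<le> real (n div q) * real q"
      proof -
        have "n = n div q * q + n mod q" by simp
        moreover have "n mod q < q" using q by simp
        ultimately have "real n \<le> real (n div q) * real q + real q"
          by (metis add_le_mono le_eq_less_or_eq of_nat_add of_nat_le_iff of_nat_mult)
        thus ?thesis by simp
      qed
      have "(real n - real q) / real q * a q \<le> real (n div q) * a q"
        using nq q1 nn[of q] by (intro mult_right_mono) (auto simp: divide_le_eq)
      hence "(real n - real q) / real q * a q \<le> a n" using divb[of n q] by linarith
      hence "(real n - real q) / real q * a q / real n \<le> a n / real n"
        by (rule divide_right_mono) (use npos in simp)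
      moreover have "(real n - real q) / real q * a q / real n = a q / real q - a q / real n"
        using npos q1 by (simp add: field_simps)
      moreover have "a q / real n < r/2"
      proof -
        have "2 * a q < real n * r" using n1 r by (simp add: pos_divide_less_eq)
        hence "a q < r/2 * real n" by (simp add: algebra_simps)
        thus ?thesis using npos by (simp add: pos_divide_less_eq)
      qed
      ultimately have "L - r < a n / real n" using q(2) by linarith
      moreover have "a n / real n \<le> L" using up npos by simp
      ultimately show ?thesis by simp
    qed
    thus "\<exists>no. \<forall>n\<ge>no. norm (a n / real n - L) < r" by blast
  qed
  thus ?thesis using up by blast
qed

lemma div_ratio_lim:
  assumes v: "(v::nat) > 0"
  shows "(\<lambda>n. real (n div v) / real n) \<longlonglongrightarrow> 1 / real v"
    "(\<lambda>n. real (n div v + 1) / real n) \<longlonglongrightarrow> 1 / real v"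
proof -
  have lo: "1 / real v - 1 / real n \<le> real (n div v) / real n" if "n \<ge> 1" for n
  proof -
    have "n mod v < v" using v by simp
    moreover have "n div v * v + n mod v = n" by simp
    moreover have "(n div v + 1) * v = n div v * v + v" by simp
    ultimately have "n < (n div v + 1) * v" by linarith
    hence "real n < real ((n div v + 1) * v)" by (simp only: of_nat_less_iff)
    hence "real n < (real (n div v) + 1) * real v" by (simp add: algebra_simps)
    hence "real n / real v - 1 < real (n div v)" using v by (simp add: field_simps)
    hence "(real n / real v - 1) / real n \<le> real (n div v) / real n" using that by (simp add: divide_right_mono)
    thus ?thesis using that v by (simp add: field_simps)
  qed
  have hi: "real (n div v) / real n \<le> 1 / real v" if "n \<ge> 1" for n
  proof -
    have "n div v * v \<le> n" by simp
    hence "real (n div v * v) \<le> real n" by (simp only: of_nat_le_iff)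
    hence "real (n div v) * real v \<le> real n" by simp
    thus ?thesis using that v by (simp add: field_simps)
  qed
  have l1: "(\<lambda>n. 1 / real v - 1 / real n) \<longlonglongrightarrow> 1 / real v"
    using tendsto_diff[OF tendsto_const lim_const_over_n[of 1]] by simp
  show A: "(\<lambda>n. real (n div v) / real n) \<longlonglongrightarrow> 1 / real v"
    by (rule tendsto_sandwich[OF _ _ l1 tendsto_const]) (auto intro: eventually_sequentiallyI[of 1] lo hi)
  have "(\<lambda>n. real (n div v) / real n + 1 / real n) \<longlonglongrightarrow> 1 / real v + 0"
    by (intro tendsto_add A lim_const_over_n)
  moreover have "\<And>n. real (n div v) / real n + 1 / real n = real (n div v + 1) / real n"
    by (simp add: add_divide_distrib)
  ultimately show "(\<lambda>n. real (n div v + 1) / real n) \<longlonglongrightarrow> 1 / real v" by simp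
qed

lemma squeeze_div:
  fixes h g :: "nat \<Rightarrow> real"
  assumes v: "(v::nat) > 0" and hl: "(\<lambda>t. h t / real t) \<longlonglongrightarrow> H" and h0: "h 0 = 0"
    and b: "\<And>n. n \<ge> 1 \<Longrightarrow> h (n div v) / real n \<le> g n \<and> g n \<le> h (n div v + 1) / real n"
  shows "g \<longlonglongrightarrow> H / real v"
proof -
  have f1: "filterlim (\<lambda>n. n div v) at_top sequentially"
    unfolding filterlim_at_top
  proof (intro allI eventually_sequentiallyI)
    fix Z n assume "Z * v \<le> n" thus "Z \<le> n div v" using v by (simp add: less_eq_div_iff_mult_less_eq)
  qed
  have f2: "filterlim (\<lambda>n. n div v + 1) at_top sequentially"
    unfolding filterlim_at_top
  proof (intro allI eventually_sequentiallyI)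
    fix Z n assume "Z * v \<le> n" hence "Z \<le> n div v" using v by (simp add: less_eq_div_iff_mult_less_eq)
    thus "Z \<le> n div v + 1" by simp
  qed
  have A: "(\<lambda>n. h (n div v) / real (n div v)) \<longlonglongrightarrow> H" by (rule filterlim_compose[OF hl f1])
  have B: "(\<lambda>n. h (n div v + 1) / real (n div v + 1)) \<longlonglongrightarrow> H" by (rule filterlim_compose[OF hl f2])
  have e1: "h (n div v) / real n = h (n div v) / real (n div v) * (real (n div v) / real n)" for n
    by (cases "n div v = 0") (auto simp: h0)
  have e2: "h (n div v + 1) / real n = h (n div v + 1) / real (n div v + 1) * (real (n div v + 1) / real n)" for n
    by simp
  have lo: "(\<lambda>n. h (n div v) / real n) \<longlonglongrightarrow> H * (1 / real v)"
    unfolding e1 by (intro tendsto_mult A div_ratio_lim(1)[OF v])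
  have hi: "(\<lambda>n. h (n div v + 1) / real n) \<longlonglongrightarrow> H * (1 / real v)"
    unfolding e2 by (intro tendsto_mult B div_ratio_lim(2)[OF v])
  have "g \<longlonglongrightarrow> H * (1 / real v)"
  proof (rule tendsto_sandwich[OF _ _ lo hi])
    show "\<forall>\<^sub>F n in sequentially. h (n div v) / real n \<le> g n"
      by (rule eventually_sequentiallyI[of 1]) (use b in blast)
    show "\<forall>\<^sub>F n in sequentially. g n \<le> h (n div v + 1) / real n"
      by (rule eventually_sequentiallyI[of 1]) (use b in blast)
  qed
  thus ?thesis by simp
qed

lemma upt_shift: "[c..<c+k] = map (\<lambda>i. c + i) [0..<k]"
  by (induction k) auto

lemma seg_eq: "seg X j a b \<omega> = map (\<lambda>i. X j (a + i + 1) \<omega>) [0..<b - a]"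
proof (cases "a \<le> b")
  case True
  have "[a+1..<b+1] = [a+1..<(a+1)+(b-a)]" using True by simp
  also have "\<dots> = map (\<lambda>i. a + 1 + i) [0..<b-a]" by (rule upt_shift)
  finally show ?thesis unfolding seg_def by (simp add: add_ac)
next
  case False thus ?thesis unfolding seg_def by simp
qed

lemma map_upt1: "map f [1..<m+1] = map (\<lambda>j. f (Suc j)) [0..<m]"
  by (induction m) auto

context lcs3 begin

lemma Ln_W: "Ln S m X n \<omega> = opt_score S (W Suc Z (\<lambda>_. n) \<omega>)"
  unfolding Ln_def W_def seg_eq map_upt1 by simp

lemma plen_W: "map (\<lambda>j. seg X j 0 (plen p n j) \<omega>) [1..<m+1] = W Suc Z (\<lambda>j. plen p n (Suc j)) \<omega>"
  unfolding W_def seg_eq map_upt1 by simp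

lemma gamma_exists:
  "\<exists>G. (\<lambda>n. Phi (\<lambda>_. n) / real n) \<longlonglongrightarrow> G \<and> (\<forall>n\<ge>1. Phi (\<lambda>_. n) / real n \<le> G)"
proof (rule fekete[where C=Smax])
  fix s t :: nat
  show "Phi (\<lambda>_. s) + Phi (\<lambda>_. t) \<le> Phi (\<lambda>_. s + t)" using Phi_super[of "\<lambda>_. s" "\<lambda>_. t"] by simp
next
  fix n :: nat show "0 \<le> Phi (\<lambda>_. n)" by (rule Phi_nonneg)
  show "Phi (\<lambda>_. n) \<le> Smax * real n" using Phi_le[of 0 "\<lambda>_. n"] m2 by simp
qed

lemma good_block:
  assumes G: "\<And>n. n \<ge> 1 \<Longrightarrow> Phi (\<lambda>_. n) / real n \<le> \<Gamma>"
  shows "real m * Phi len \<le> \<Gamma> * real (\<Sum>j<m. len j)"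
proof -
  define T where "T = (\<Sum>j<m. len j)"
  define rot where "rot i = (\<lambda>j. if j < m then (j + i) mod m else j)" for i
  have pr: "rot i permutes {..<m}" for i unfolding rot_def by (rule rot_permutes)
  have "real m * Phi len = (\<Sum>i<m. Phi (\<lambda>j. len (rot i j)))"
    using Phi_perm[OF pr] by simp
  also have "\<dots> \<le> Phi (\<lambda>j. \<Sum>i<m. len (rot i j))" by (rule Phi_sum)
  also have "\<dots> = Phi (\<lambda>_. T)"
  proof (rule Phi_cong)
    fix j assume j: "j < m"
    have "(\<Sum>i<m. len (rot i j)) = (\<Sum>i<m. len ((j + i) mod m))" unfolding rot_def using j by simp
    also have "\<dots> = (\<Sum>k<m. len k)"
      using sum.reindex_bij_betw[OF rot_bij[of j m], of len] by simp
    finally show "(\<Sum>i<m. len (rot i j)) = T" unfolding T_def .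
  qed
  also have "\<dots> \<le> \<Gamma> * real T"
  proof (cases "T = 0")
    case True thus ?thesis using Phi_zero[of 0 "\<lambda>_. T"] m2 by simp
  next
    case False
    hence "Phi (\<lambda>_. T) / real T \<le> \<Gamma>" using G by simp
    thus ?thesis using False by (simp add: divide_le_eq mult.commute)
  qed
  finally show ?thesis unfolding T_def .
qed

end

lemma sum_shift2: "(\<Sum>i=2..Suc m'. f (i - 1)) = (\<Sum>k<m'. (f (Suc k) :: real))"
  by (induction m') auto

lemma telescope:
  fixes f :: "nat \<Rightarrow> nat"
  assumes "\<forall>k<d. f k \<le> f (Suc k)"
  shows "(\<Sum>k=1..d. f k - f (k-1)) = f d - f 0 \<and> f 0 \<le> f d"
  using assms
proof (induction d)
  case 0 thus ?case by simp
next
  case (Suc d)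
  hence ih: "(\<Sum>k=1..d. f k - f (k-1)) = f d - f 0" "f 0 \<le> f d" by auto
  have "f d \<le> f (Suc d)" using Suc.prems by auto
  thus ?case using ih by simp
qed

context lcs3 begin

lemma bad_block:
  fixes \<delta> :: real and p1 p2 :: "nat \<Rightarrow> real" and len :: "nat \<Rightarrow> nat"
  assumes \<delta>: "0 < \<delta>"
    and gamma_p: "\<forall>p. (\<forall>j\<in>{2..m}. 0 < p j) \<and> (\<exists>j\<in>{2..m}. p j < p1 j \<or> p2 j < p j)
                   \<longrightarrow> gamma_star_p M S m X p \<le> \<delta>"
    and v0: "len 0 > 0"
    and bad: "\<exists>j\<in>{2..m}. \<not> (real (len 0) * p1 j \<le> real (len (j-1)) \<and> real (len (j-1)) \<le> real (len 0) * p2 j)"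
  shows "real m * Phi len \<le> \<delta> * real (\<Sum>j<m. len j)"
proof -
  define v where "v = len 0"
  define T where "T = (\<Sum>j<m. len j)"
  have vpos: "v > 0" using v0 unfolding v_def .
  have vT: "v \<le> T" unfolding T_def v_def using m2 by (intro member_le_sum) auto
  have Tpos: "real T > 0" using vT vpos by simp
  show ?thesis
  proof (cases "\<exists>j\<in>{1..<m}. len j = 0")
    case True
    then obtain j where "j < m" "len j = 0" by auto
    hence "Phi len = 0" by (rule Phi_zero)
    moreover have "0 \<le> \<delta> * real (\<Sum>j<m. len j)" using \<delta> by (intro mult_nonneg_nonneg) (auto simp del: of_nat_sum)
    ultimately show ?thesis by simp
  next
    case False
    hence lpos: "\<And>j. j < m \<Longrightarrow> len j > 0" using v0 by (metis atLeastLessThan_iff gr0I less_one not_le)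
    define p where "p j = real (len (j - 1)) / real v" for j
    have hp: "\<forall>j\<in>{2..m}. 0 < p j" unfolding p_def using lpos vpos by auto
    have hb: "\<exists>j\<in>{2..m}. p j < p1 j \<or> p2 j < p j"
    proof -
      obtain j where j: "j \<in> {2..m}" and nb: "\<not> (real v * p1 j \<le> real (len (j-1)) \<and> real (len (j-1)) \<le> real v * p2 j)"
        using bad unfolding v_def by blast
      have "p j < p1 j \<or> p2 j < p j"
        using nb vpos unfolding p_def by (auto simp: pos_divide_less_eq pos_less_divide_eq mult.commute)
      thus ?thesis using j by blast
    qed
    have gle: "gamma_star_p M S m X p \<le> \<delta>" using gamma_p hp hb by blast
    define ell where "ell n j = plen p n (Suc j)" for n j
    have int_eq: "(\<integral>\<omega>. opt_score S (map (\<lambda>j. seg X j 0 (plen p n j) \<omega>) [1..<m+1]) \<partial>M) = Phi (ell n)" for n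
      unfolding plen_W ell_def by (rule EW0(2))
    obtain m' where m': "m = Suc m'" using m2 by (cases m) auto
    have sump: "1 + (\<Sum>i=2..m. p i) = real T / real v"
    proof -
      have "(\<Sum>i=2..m. p i) = (\<Sum>k<m'. real (len (Suc k)) / real v)"
        unfolding p_def m' by (rule sum_shift2)
      moreover have "real T = real v + (\<Sum>k<m'. real (len (Suc k)))"
        unfolding T_def m' v_def sum.lessThan_Suc_shift by simp
      moreover have "(\<Sum>k<m'. real (len (Suc k)) / real v) = (\<Sum>k<m'. real (len (Suc k))) / real v"
        by (rule sum_divide_distrib[symmetric])
      ultimately show ?thesis using vpos by (simp add: field_simps)
    qed
    define D where "D = real m * real v / real T"
    have geq: "(\<lambda>n. real m * (\<integral>\<omega>. opt_score S (map (\<lambda>j. seg X j 0 (plen p n j) \<omega>) [1..<m+1]) \<partial>M)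
      / (real n * (1 + (\<Sum>i=2..m. p i)))) = (\<lambda>n. D * (Phi (ell n) / real n))"
    proof
      fix n
      show "real m * (\<integral>\<omega>. opt_score S (map (\<lambda>j. seg X j 0 (plen p n j) \<omega>) [1..<m+1]) \<partial>M)
        / (real n * (1 + (\<Sum>i=2..m. p i))) = D * (Phi (ell n) / real n)"
        unfolding int_eq sump D_def using vpos Tpos by (cases "n = 0") (simp_all add: field_simps)
    qed
    define h where "h t = Phi (\<lambda>j. t * len j)" for t
    have "\<exists>H. (\<lambda>t. h t / real t) \<longlonglongrightarrow> H \<and> (\<forall>t\<ge>1. h t / real t \<le> H)"
    proof (rule fekete[where C="Smax * real v"])
      fix s t :: nat
      have "h s + h t \<le> Phi (\<lambda>j. s * len j + t * len j)" unfolding h_def by (rule Phi_super)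
      also have "\<dots> = h (s + t)" unfolding h_def by (rule Phi_cong) (simp add: add_mult_distrib)
      finally show "h s + h t \<le> h (s + t)" .
    next
      fix n :: nat
      show "0 \<le> h n" unfolding h_def by (rule Phi_nonneg)
      have "h n \<le> Smax * real (n * len 0)" unfolding h_def using Phi_le[of 0 "\<lambda>j. n * len j"] m2 by simp
      thus "h n \<le> Smax * real v * real n" unfolding v_def by (simp add: algebra_simps)
    qed
    then obtain H where hH: "(\<lambda>t. h t / real t) \<longlonglongrightarrow> H" by blast
    have HP: "Phi len \<le> H"
    proof (rule LIMSEQ_le_const[OF hH], intro exI allI impI)
      fix t :: nat assume t: "1 \<le> t"
      have "real t * Phi len \<le> h t" unfolding h_def by (rule Phi_mult)
      thus "Phi len \<le> h t / real t" using t by (simp add: le_divide_eq mult.commute)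
    qed
    have h0: "h 0 = 0" unfolding h_def using Phi_zero[of 0 "\<lambda>j. 0 * len j"] m2 by simp
    have bnds: "h (n div v) / real n \<le> Phi (ell n) / real n \<and> Phi (ell n) / real n \<le> h (n div v + 1) / real n"
      if n: "n \<ge> 1" for n
    proof -
      define t where "t = n div v"
      have tn: "real t * real v \<le> real n"
      proof -
        have "t * v \<le> n" unfolding t_def by simp
        hence "real (t * v) \<le> real n" by (simp only: of_nat_le_iff)
        thus ?thesis by simp
      qed
      have nt: "real n \<le> (real t + 1) * real v"
      proof -
        have "n mod v < v" using vpos by simp
        moreover have "n div v * v + n mod v = n" by simp
        moreover have "(n div v + 1) * v = n div v * v + v" by simp
        ultimately have "n \<le> (t + 1) * v" unfolding t_def by linarith
        hence "real n \<le> real ((t + 1) * v)" by (simp only: of_nat_le_iff)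
        thus ?thesis by (simp add: algebra_simps)
      qed
      have pw: "t * len j \<le> ell n j \<and> ell n j \<le> (t + 1) * len j" if j: "j < m" for j
      proof (cases "j = 0")
        case True
        have "ell n 0 = n" unfolding ell_def plen_def by simp
        hence "ell n j = n" using True by simp
        moreover have "t * v \<le> n" unfolding t_def by simp
        moreover have "n \<le> (t + 1) * v" using nt by (metis of_nat_1 of_nat_add of_nat_le_iff of_nat_mult)
        ultimately show ?thesis using True unfolding v_def by simp
      next
        case False
        define x where "x = real n * (real (len j) / real v)"
        have lx: "ell n j = nat \<lceil>x\<rceil>" unfolding ell_def plen_def p_def x_def using False by simp
        have x1: "real (t * len j) \<le> x"
        proof -
          have "real t * real v * (real (len j) / real v) \<le> real n * (real (len j) / real v)"
            using tn by (intro mult_right_mono) auto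
          thus ?thesis unfolding x_def using vpos by simp
        qed
        have x2: "x \<le> real ((t + 1) * len j)"
        proof -
          have "real n * (real (len j) / real v) \<le> (real t + 1) * real v * (real (len j) / real v)"
            using nt by (intro mult_right_mono) auto
          thus ?thesis unfolding x_def using vpos by (simp add: algebra_simps)
        qed
        have "\<lceil>real_of_int (int (t * len j))\<rceil> \<le> \<lceil>x\<rceil>" by (rule ceiling_mono) (use x1 in simp)
        hence "int (t * len j) \<le> \<lceil>x\<rceil>" by (simp only: ceiling_of_int)
        hence a1: "t * len j \<le> nat \<lceil>x\<rceil>" by linarith
        have "\<lceil>x\<rceil> \<le> int ((t + 1) * len j)" using x2 by (simp add: ceiling_le_iff)
        hence a2: "nat \<lceil>x\<rceil> \<le> (t + 1) * len j" by linarith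
        show ?thesis using a1 a2 lx by simp
      qed
      have "h t \<le> Phi (ell n)" unfolding h_def by (rule Phi_mono) (use pw in blast)
      moreover have "Phi (ell n) \<le> h (t + 1)" unfolding h_def by (rule Phi_mono) (use pw in blast)
      ultimately show ?thesis unfolding t_def using n by (simp add: divide_right_mono)
    qed
    have lim1: "(\<lambda>n. Phi (ell n) / real n) \<longlonglongrightarrow> H / real v"
      by (rule squeeze_div[OF vpos hH h0 bnds])
    have "(\<lambda>n. D * (Phi (ell n) / real n)) \<longlonglongrightarrow> D * (H / real v)"
      by (intro tendsto_mult tendsto_const lim1)
    hence "gamma_star_p M S m X p = D * (H / real v)"
      unfolding gamma_star_p_def geq by (rule limI)
    hence "D * (H / real v) \<le> \<delta>" using gle by simp
    hence "real m * H / real T \<le> \<delta>" unfolding D_def using vpos by (simp add: field_simps)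
    hence "real m * H \<le> \<delta> * real T" using Tpos by (simp add: divide_le_eq)
    moreover have "real m * Phi len \<le> real m * H" using HP by (intro mult_left_mono) auto
    ultimately show ?thesis unfolding T_def by simp
  qed
qed

end

lemma final_arith:
  fixes SP e G \<delta> \<eta> \<epsilon> n mm c :: real
  assumes mm: "mm > 0" and a1: "mm * SP \<le> G * mm * n - (G - \<delta>) * \<epsilon> * n" and a2: "e \<ge> G * n - c * n"
    and cm: "c * mm = (G - \<delta> - \<eta>) * \<epsilon>"
  shows "SP - e \<le> - (\<eta> * \<epsilon> * n / mm)"
proof -
  have "mm * e \<ge> mm * (G * n - c * n)" using a2 mm by (intro mult_left_mono) auto
  hence b: "mm * e \<ge> G * mm * n - (c * mm) * n" by (simp add: algebra_simps)
  have "mm * (SP - e) \<le> G * mm * n - (G - \<delta>) * \<epsilon> * n - (G * mm * n - (c * mm) * n)"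
    using a1 b by (simp add: algebra_simps)
  also have "\<dots> = - (\<eta> * \<epsilon> * n)" unfolding cm by (simp add: algebra_simps)
  finally have "mm * (SP - e) \<le> - (\<eta> * \<epsilon> * n)" .
  thus ?thesis using mm by (simp add: field_simps)
qed

theorem lemma3p2:
  fixes M :: "'w measure" and A :: "real set" and m :: nat
    and X :: "nat \<Rightarrow> nat \<Rightarrow> 'w \<Rightarrow> real" and S :: "real list \<Rightarrow> real"
    and D \<epsilon> \<delta> \<eta> :: real and p1 p2 :: "nat \<Rightarrow> real"
  assumes "prob_space M"
    and "m \<ge> 2"
    and "finite A"
    and X_meas: "\<forall>j\<in>{1..m}. \<forall>i\<ge>1. X j i \<in> borel_measurable M"
    and X_vals: "\<forall>j\<in>{1..m}. \<forall>i\<ge>1. \<forall>\<omega>\<in>space M. X j i \<omega> \<in> A"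
    and X_indep: "prob_space.indep_vars M (\<lambda>_. borel) (\<lambda>(j, i). X j i) ({1..m} \<times> {1..})"
    and X_ident: "\<forall>j\<in>{1..m}. \<forall>i\<ge>1. distr M borel (X j i) = distr M borel (X 1 1)"
    and S_nonneg: "\<forall>x. length x = m \<and> set x \<subseteq> A \<longrightarrow> S x \<ge> 0"
    and S_nonzero: "\<exists>x. length x = m \<and> set x \<subseteq> A \<and> S x \<noteq> 0"
    and S_sym: "\<forall>x \<sigma>. length x = m \<and> set x \<subseteq> A \<and> \<sigma> permutes {..<m}
                   \<longrightarrow> S (permute_list \<sigma> x) = S x"
    and S_bdd: "bdd_above (S ` {x. length x = m \<and> set x \<subseteq> A})"
    and "D > 0"
    and S_lip: "\<forall>x y. length x = m \<and> set x \<subseteq> A \<and> length y = m \<and> set y \<subseteq> A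
                   \<and> card {i. i < m \<and> x ! i \<noteq> y ! i} \<le> 1 \<longrightarrow> \<bar>S x - S y\<bar> \<le> D"
    and "\<epsilon> > 0"
    and "0 < \<delta>" and "\<delta> < gamma_star M S m X"
    and p_bounds: "\<forall>j\<in>{2..m}. 0 < p1 j \<and> p1 j < 1 \<and> 1 < p2 j"
    and gamma_p: "\<forall>p. (\<forall>j\<in>{2..m}. 0 < p j) \<and> (\<exists>j\<in>{2..m}. p j < p1 j \<or> p2 j < p j)
                   \<longrightarrow> gamma_star_p M S m X p \<le> \<delta>"
    and "0 < \<eta>" and "\<eta> < gamma_star M S m X - \<delta>"
  shows "\<exists>N. \<forall>n\<ge>N. \<forall>v d. 0 < v \<and> 0 < d \<and> n = v * d \<longrightarrow>
           (\<forall>r\<in>Rbar m v d \<epsilon> p1 p2.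
              (\<integral>\<omega>. (L_r S m X v d r \<omega> - Ln S m X n \<omega>) \<partial>M) \<le> - (\<eta> * \<epsilon> * real n / real m))"
proof -
  interpret L: lcs3 M A m X S
    by (intro lcs3.intro lcs3_axioms.intro) (rule assms)+
  have mpos: "real m > 0" using assms(2) by simp
  obtain \<Gamma> where \<Gamma>lim: "(\<lambda>n. L.Phi (\<lambda>_. n) / real n) \<longlonglongrightarrow> \<Gamma>"
    and \<Gamma>ub: "\<forall>n\<ge>1. L.Phi (\<lambda>_. n) / real n \<le> \<Gamma>"
    using L.gamma_exists by blast
  have Lint: "(\<integral>\<omega>. Ln S m X n \<omega> \<partial>M) = L.Phi (\<lambda>_. n)" for n
    unfolding L.Ln_W by (rule L.EW0(2))
  have Lintg: "integrable M (\<lambda>\<omega>. Ln S m X n \<omega>)" for n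
    unfolding L.Ln_W by (rule L.EW0(1))
  have gs: "gamma_star M S m X = \<Gamma>"
    unfolding gamma_star_def Lint by (rule limI[OF \<Gamma>lim])
  define c where "c = (\<Gamma> - \<delta> - \<eta>) * \<epsilon> / real m"
  have cpos: "c > 0" unfolding c_def using assms(2) \<open>\<eta> < gamma_star M S m X - \<delta>\<close> \<open>\<epsilon> > 0\<close> gs by simp
  have cm: "c * real m = (\<Gamma> - \<delta> - \<eta>) * \<epsilon>" unfolding c_def using mpos by simp
  obtain N0 where N0: "\<forall>n\<ge>N0. norm (L.Phi (\<lambda>_. n) / real n - \<Gamma>) < c"
    using LIMSEQ_D[OF \<Gamma>lim cpos] by blast
  have Gd_pos: "\<Gamma> - \<delta> > 0" using gs \<open>\<delta> < gamma_star M S m X\<close> by simp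
  show ?thesis
  proof (intro exI[of _ "max N0 1"] allI impI ballI)
    fix n v d :: nat and r
    assume n: "max N0 1 \<le> n" and vd: "0 < v \<and> 0 < d \<and> n = v * d" and r: "r \<in> Rbar m v d \<epsilon> p1 p2"
    have v: "0 < v" and d: "0 < d" and nvd: "n = v * d" using vd by auto
    define Gd where "Gd = {k\<in>{1..d}. \<forall>j\<in>{2..m}.
          real v * p1 j \<le> real (r j k - r j (k-1)) \<and> real (r j k - r j (k-1)) \<le> real v * p2 j}"
    have adm: "admissible_r m v d r" and cardG: "real (card Gd) < (1 - \<epsilon>) * real d"
      using r unfolding Rbar_def Gd_def by auto
    define off where "off k j = (if j = 0 then v * (k - 1) else r (Suc j) (k - 1))" for k j
    define lk where "lk k j = (if j = 0 then v else r (Suc j) k - r (Suc j) (k - 1))" for k j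
    have upt0: "[0..<m] = 0 # [1..<m]" using assms(2) by (simp add: upt_rec)
    have upt2: "[2..<m+1] = map Suc [1..<m]" using map_Suc_upt[of 1 m] by (simp add: numeral_2_eq_2)
    have Wk: "opt_score S (seg X 1 (v * (k - 1)) (v * k) \<omega> # map (\<lambda>j. seg X j (r j (k - 1)) (r j k) \<omega>) [2..<m+1])
        = opt_score S (L.W Suc (off k) (lk k) \<omega>)" if k: "k \<ge> 1" for k \<omega>
    proof -
      have ve: "v * k - v * (k - Suc 0) = v" using k by (cases k) (auto simp: algebra_simps)
      have "seg X 1 (v * (k - 1)) (v * k) \<omega> # map (\<lambda>j. seg X j (r j (k - 1)) (r j k) \<omega>) [2..<m+1]
          = L.W Suc (off k) (lk k) \<omega>"
        unfolding L.W_def upt0 upt2 seg_eq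
        by (auto simp: ve off_def lk_def add_ac)
      thus ?thesis by simp
    qed
    have Lr_eq: "L_r S m X v d r \<omega> = (\<Sum>k=1..d. opt_score S (L.W Suc (off k) (lk k) \<omega>))" for \<omega>
      unfolding L_r_def by (rule sum.cong[OF refl]) (use Wk in auto)
    have intW: "integrable M (\<lambda>\<omega>. opt_score S (L.W Suc (off k) (lk k) \<omega>))"
      and EWk: "(\<integral>\<omega>. opt_score S (L.W Suc (off k) (lk k) \<omega>) \<partial>M) = L.Phi (lk k)" for k
      using L.EW[OF L.Suc_inj L.Suc_rng, of "off k" "lk k"] by auto
    have intLr: "integrable M (\<lambda>\<omega>. L_r S m X v d r \<omega>)"
      unfolding Lr_eq by (rule Bochner_Integration.integrable_sum) (rule intW)
    have ELr: "(\<integral>\<omega>. L_r S m X v d r \<omega> \<partial>M) = (\<Sum>k=1..d. L.Phi (lk k))"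
      unfolding Lr_eq by (subst Bochner_Integration.integral_sum) (auto intro: intW simp: EWk)
    have Ediff: "(\<integral>\<omega>. (L_r S m X v d r \<omega> - Ln S m X n \<omega>) \<partial>M) = (\<Sum>k=1..d. L.Phi (lk k)) - L.Phi (\<lambda>_. n)"
      using Bochner_Integration.integral_diff[OF intLr Lintg[of n]] ELr Lint[of n] by simp
    define T where "T k = (\<Sum>j<m. lk k j)" for k
    have sumT: "(\<Sum>k=1..d. T k) = m * n"
    proof -
      have "(\<Sum>k=1..d. T k) = (\<Sum>j<m. \<Sum>k=1..d. lk k j)" unfolding T_def by (rule sum.swap)
      also have "\<dots> = (\<Sum>j<m. n)"
      proof (rule sum.cong[OF refl])
        fix j assume j: "j \<in> {..<m}"
        show "(\<Sum>k=1..d. lk k j) = n"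
        proof (cases "j = 0")
          case True thus ?thesis unfolding lk_def using nvd by simp
        next
          case False
          have sj: "Suc j \<in> {2..m}" using j False by auto
          have a: "r (Suc j) 0 = 0" "r (Suc j) d = v * d" "\<forall>k<d. r (Suc j) k \<le> r (Suc j) (Suc k)"
            using adm sj unfolding admissible_r_def by auto
          have "(\<Sum>k=1..d. lk k j) = (\<Sum>k=1..d. r (Suc j) k - r (Suc j) (k - 1))"
            unfolding lk_def using False by simp
          also have "\<dots> = r (Suc j) d - r (Suc j) 0" using telescope[OF a(3)] by simp
          finally show ?thesis using a nvd by simp
        qed
      qed
      finally show ?thesis by simp
    qed
    have Tv: "v \<le> T k" for k
    proof -
      have "lk k 0 \<le> T k" unfolding T_def using assms(2) by (intro member_le_sum) auto
      thus ?thesis unfolding lk_def by simp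
    qed
    have \<Gamma>ub': "\<And>n. n \<ge> 1 \<Longrightarrow> L.Phi (\<lambda>_. n) / real n \<le> \<Gamma>" using \<Gamma>ub by blast
    have blk: "real m * L.Phi (lk k) \<le> \<Gamma> * real (T k) - (if k \<in> Gd then 0 else (\<Gamma> - \<delta>) * real v)"
      if k: "k \<in> {1..d}" for k
    proof (cases "k \<in> Gd")
      case True
      thus ?thesis using L.good_block[OF \<Gamma>ub', of "lk k"] unfolding T_def by simp
    next
      case False
      have bad: "\<exists>j\<in>{2..m}. \<not> (real (lk k 0) * p1 j \<le> real (lk k (j-1)) \<and> real (lk k (j-1)) \<le> real (lk k 0) * p2 j)"
      proof -
        have "\<not> (\<forall>j\<in>{2..m}. real v * p1 j \<le> real (r j k - r j (k-1)) \<and> real (r j k - r j (k-1)) \<le> real v * p2 j)"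
          using False k unfolding Gd_def by auto
        then obtain j where j: "j \<in> {2..m}" and nj: "\<not> (real v * p1 j \<le> real (r j k - r j (k-1)) \<and> real (r j k - r j (k-1)) \<le> real v * p2 j)"
          by blast
        have e1: "lk k (j-1) = r j k - r j (k-1)" and e2: "lk k 0 = v" using j unfolding lk_def by auto
        show ?thesis
        proof (rule bexI[OF _ j])
          show "\<not> (real (lk k 0) * p1 j \<le> real (lk k (j-1)) \<and> real (lk k (j-1)) \<le> real (lk k 0) * p2 j)"
            unfolding e1 e2 by (rule nj)
        qed
      qed
      have "real m * L.Phi (lk k) \<le> \<delta> * real (T k)"
        using L.bad_block[OF \<open>0 < \<delta>\<close> gamma_p _ bad] v unfolding T_def lk_def by simp
      also have "\<dots> = \<Gamma> * real (T k) - (\<Gamma> - \<delta>) * real (T k)" by (simp add: algebra_simps)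
      also have "\<dots> \<le> \<Gamma> * real (T k) - (\<Gamma> - \<delta>) * real v"
        using Tv[of k] Gd_pos by (simp add: mult_left_mono)
      finally show ?thesis using False by simp
    qed
    have GdS: "Gd \<subseteq> {1..d}" unfolding Gd_def by auto
    have cardB: "card ({1..d} - Gd) = d - card Gd" using GdS by (simp add: card_Diff_subset finite_subset)
    have cGd: "card Gd \<le> d" using card_mono[OF _ GdS] by simp
    have cB: "real (card ({1..d} - Gd)) \<ge> \<epsilon> * real d"
      using cardB cGd cardG by (simp add: of_nat_diff algebra_simps)
    have sumif: "(\<Sum>k=1..d. (if k \<in> Gd then 0 else (\<Gamma> - \<delta>) * real v)) = real (card ({1..d} - Gd)) * ((\<Gamma> - \<delta>) * real v)"
    proof -
      have "(\<Sum>k=1..d. (if k \<in> Gd then 0 else (\<Gamma> - \<delta>) * real v)) = (\<Sum>k\<in>{1..d} - Gd. (\<Gamma> - \<delta>) * real v)"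
        by (rule sum.mono_neutral_cong_right) auto
      thus ?thesis by simp
    qed
    have SP: "real m * (\<Sum>k=1..d. L.Phi (lk k)) \<le> \<Gamma> * real m * real n - (\<Gamma> - \<delta>) * \<epsilon> * real n"
    proof -
      have "real m * (\<Sum>k=1..d. L.Phi (lk k)) = (\<Sum>k=1..d. real m * L.Phi (lk k))" by (simp add: sum_distrib_left)
      also have "\<dots> \<le> (\<Sum>k=1..d. \<Gamma> * real (T k) - (if k \<in> Gd then 0 else (\<Gamma> - \<delta>) * real v))"
        by (rule sum_mono) (rule blk)
      also have "\<dots> = (\<Sum>k=1..d. \<Gamma> * real (T k)) - (\<Sum>k=1..d. (if k \<in> Gd then 0 else (\<Gamma> - \<delta>) * real v))"
        by (rule sum_subtractf)
      also have "\<dots> = \<Gamma> * real (\<Sum>k=1..d. T k) - real (card ({1..d} - Gd)) * ((\<Gamma> - \<delta>) * real v)"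
        unfolding sumif by (simp add: sum_distrib_left)
      also have "\<dots> \<le> \<Gamma> * real m * real n - (\<Gamma> - \<delta>) * \<epsilon> * real n"
      proof -
        have "\<epsilon> * real d * ((\<Gamma> - \<delta>) * real v) \<le> real (card ({1..d} - Gd)) * ((\<Gamma> - \<delta>) * real v)"
          using cB Gd_pos v by (intro mult_right_mono) auto
        moreover have "\<epsilon> * real d * ((\<Gamma> - \<delta>) * real v) = (\<Gamma> - \<delta>) * \<epsilon> * real n"
          using nvd by (simp add: algebra_simps)
        ultimately show ?thesis unfolding sumT by (simp add: algebra_simps)
      qed
      finally show ?thesis .
    qed
    have n1: "n \<ge> 1" and nN: "n \<ge> N0" using n by auto
    have "norm (L.Phi (\<lambda>_. n) / real n - \<Gamma>) < c" using N0 nN by blast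
    hence "\<Gamma> - c < L.Phi (\<lambda>_. n) / real n" by auto
    hence e: "L.Phi (\<lambda>_. n) \<ge> \<Gamma> * real n - c * real n" using n1 by (simp add: field_simps)
    show "(\<integral>\<omega>. (L_r S m X v d r \<omega> - Ln S m X n \<omega>) \<partial>M) \<le> - (\<eta> * \<epsilon> * real n / real m)"
      unfolding Ediff by (rule final_arith[OF mpos SP e cm])
  qed
qed

end
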